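(* Let $m\ge1$, let $B_1,B_2$ be balls in $\mathbb{R}^m/\mathbb{Z}^m$ and let $r,q\in\mathbb{Z}\setminus\{0\}$. Then \[ |A_{1,m}(r,B_1)\cap A_{1,m}(q,B_2)|\le 2^m\Bigl(|B_1||B_2|+|B_2|\,|q|^{-m}\gcd(r,q)^m\Bigr). \]
   Context: Balls are max-norm balls in $\mathbb{R}^m/\mathbb{Z}^m$ and $|\cdot|$ is Lebesgue measure. For $q\in\mathbb{Z}$ and a ball $B$, $A_{1,m}(q,B)=\{\mathbf{x}\in[0,1]^m: q\mathbf{x}+\mathbf{p}\in B\text{ for some }\mathbf{p}\in\mathbb{Z}^m\}$. *)

theory Defs
  imports "HOL-Analysis.Analysis"
begin

definition int_vec :: "real ^ 'm \<Rightarrow> bool" where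
  "int_vec p \<longleftrightarrow> (\<forall>i. p $ i \<in> \<int>)"

text \<open>The open max-norm ball of centre c and radius rho in the torus R^m/Z^m,
  represented by its (Z^m-periodic) preimage in R^m.\<close>
definition torus_ball :: "real ^ 'm \<Rightarrow> real \<Rightarrow> (real ^ 'm) set" where
  "torus_ball c \<rho> = {y. \<exists>p. int_vec p \<and> (\<forall>i. \<bar>y $ i + p $ i - c $ i\<bar> < \<rho>)}"

text \<open>Haar (Lebesgue) measure on the torus of a periodic set: measure of its
  intersection with the fundamental domain [0,1)^m.\<close>
definition torus_measure :: "(real ^ 'm) set \<Rightarrow> real" where
  "torus_measure S = measure lebesgue (S \<inter> {x. \<forall>i. 0 \<le> x $ i \<and> x $ i < 1})"

definition A1 :: "int \<Rightarrow> (real ^ 'm) set \<Rightarrow> (real ^ 'm) set" where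
  "A1 q B = {x. (\<forall>i. 0 \<le> x $ i \<and> x $ i \<le> 1) \<and>
                 (\<exists>p. int_vec p \<and> of_int q *\<^sub>R x + p \<in> B)}"

end

theory Submission
  imports Defs
begin



lemma prod_basis_vec:
  fixes g :: "'n::finite \<Rightarrow> 'a::comm_monoid_mult"
  shows "(\<Prod>b\<in>(Basis::(real^'n) set). g (axis_index b)) = (\<Prod>i\<in>UNIV. g i)"
proof -
  have B: "(Basis::(real^'n) set) = (\<lambda>i. axis i 1) ` UNIV"
    unfolding Basis_vec_def by auto
  have inj: "inj (\<lambda>i::'n. axis i (1::real))"
    by (auto simp: inj_on_def axis_eq_axis)
  show ?thesis unfolding B by (subst prod.reindex[OF inj]) simp
qed

lemma emeasure_prod_set:
  fixes S :: "'n::finite \<Rightarrow> real set"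
  assumes [measurable]: "\<And>i. S i \<in> sets borel"
  shows "emeasure lborel {x::real^'n. \<forall>i. x$i \<in> S i} = (\<Prod>i\<in>UNIV. emeasure lborel (S i))"
proof -
  have H: "indicator {x::real^'n. \<forall>i. x$i \<in> S i} = (\<lambda>x. \<Prod>b\<in>Basis. indicator (S (axis_index b)) (x \<bullet> b) :: ennreal)"
  proof
    fix x :: "real^'n"
    have "(\<Prod>b\<in>Basis. indicator (S (axis_index b)) (x \<bullet> b) :: ennreal) = (\<Prod>i\<in>UNIV. indicator (S i) (x $ i))"
    proof -
      have "\<And>b. b \<in> (Basis::(real^'n) set) \<Longrightarrow> x \<bullet> b = x $ axis_index b"
        by (metis axis_index cart_eq_inner_axis)
      then have "(\<Prod>b\<in>Basis. indicator (S (axis_index b)) (x \<bullet> b) :: ennreal)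
          = (\<Prod>b\<in>(Basis::(real^'n) set). indicator (S (axis_index b)) (x $ (axis_index b)))"
        by (auto intro!: prod.cong)
      then show ?thesis using prod_basis_vec[of "\<lambda>i. indicator (S i) (x $ i) :: ennreal"] by simp
    qed
    also have "\<dots> = indicator {x::real^'n. \<forall>i. x$i \<in> S i} x"
    proof (cases "\<forall>i. x$i \<in> S i")
      case True then show ?thesis by (simp add: indicator_def)
    next
      case False
      then obtain i where "x$i \<notin> S i" by blast
      then have "(\<Prod>i\<in>UNIV. indicator (S i) (x $ i) :: ennreal) = 0"
        by (intro prod_zero) (use \<open>x$i \<notin> S i\<close> in \<open>auto simp: indicator_def\<close>)
      with False show ?thesis by (simp add: indicator_def)
    qed
    finally show "indicator {x::real^'n. \<forall>i. x$i \<in> S i} x = (\<Prod>b\<in>Basis. indicator (S (axis_index b)) (x \<bullet> b) :: ennreal)" by simp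
  qed
  have "{x::real^'n. \<forall>i. x$i \<in> S i} \<in> sets lborel"
  proof -
    have "{x::real^'n. \<forall>i. x$i \<in> S i} = (\<Inter>i. (\<lambda>x. x$i) -` S i)" by auto
    also have "\<dots> \<in> sets borel"
    proof (intro sets.finite_INT)
      fix i :: 'n
      have "(\<lambda>x::real^'n. x$i) \<in> borel_measurable borel"
        by (intro borel_measurable_continuous_onI continuous_intros)
      then have "(\<lambda>x::real^'n. x$i) -` S i \<inter> space borel \<in> sets borel"
        by (rule measurable_sets) (rule assms)
      then show "(\<lambda>x::real^'n. x$i) -` S i \<in> sets borel" by simp
    qed auto
    finally show ?thesis by simp
  qed
  then have "emeasure lborel {x::real^'n. \<forall>i. x$i \<in> S i} = (\<integral>\<^sup>+x. indicator {x::real^'n. \<forall>i. x$i \<in> S i} x \<partial>lborel)"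
    by (rule nn_integral_indicator[symmetric])
  also have "\<dots> = (\<integral>\<^sup>+x. (\<Prod>b\<in>(Basis::(real^'n) set). indicator (S (axis_index b)) (x \<bullet> b)) \<partial>lborel)"
    by (simp only: H)
  also have "\<dots> = (\<Prod>b\<in>(Basis::(real^'n) set). (\<integral>\<^sup>+x. indicator (S (axis_index b)) x \<partial>lborel))"
    by (subst nn_integral_lborel_prod) auto
  also have "\<dots> = (\<Prod>b\<in>(Basis::(real^'n) set). emeasure lborel (S (axis_index b)))"
    by simp
  also have "\<dots> = (\<Prod>i\<in>UNIV. emeasure lborel (S i))"
    by (rule prod_basis_vec)
  finally show ?thesis .
qed




definition Tset :: "real \<Rightarrow> real \<Rightarrow> real set" where
  "Tset c \<rho> = {y. \<exists>n::int. \<bar>y + of_int n - c\<bar> < \<rho>}"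

definition ar :: "real \<Rightarrow> real" where
  "ar \<rho> = (if \<rho> \<le> 0 then 0 else min (2*\<rho>) 1)"

lemma Tset_open: "open (Tset c \<rho>)"
proof -
  have "Tset c \<rho> = (\<Union>n::int. {c - of_int n - \<rho> <..< c - of_int n + \<rho>})"
    unfolding Tset_def apply (auto simp: abs_less_iff)
    apply (rule_tac x=n in exI, linarith)+ done
  then show ?thesis by (auto intro!: open_UN)
qed

lemma Tset_borel[measurable]: "Tset c \<rho> \<in> sets borel"
  using Tset_open by (rule borel_open)

lemma Tset_shift: "(y + of_int k \<in> Tset c \<rho>) = (y \<in> Tset c \<rho>)"
proof
  assume "y + of_int k \<in> Tset c \<rho>"
  then obtain n::int where "\<bar>y + of_int k + of_int n - c\<bar> < \<rho>" unfolding Tset_def by auto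
  then show "y \<in> Tset c \<rho>" unfolding Tset_def by (auto intro!: exI[of _ "k+n"] simp: add.assoc)
next
  assume "y \<in> Tset c \<rho>"
  then obtain n::int where "\<bar>y + of_int n - c\<bar> < \<rho>" unfolding Tset_def by auto
  then show "y + of_int k \<in> Tset c \<rho>" unfolding Tset_def by (auto intro!: exI[of _ "n-k"])
qed

lemma Tset_neg: "(- y \<in> Tset c \<rho>) = (y \<in> Tset (-c) \<rho>)"
proof
  assume "- y \<in> Tset c \<rho>"
  then obtain n::int where "\<bar>- y + of_int n - c\<bar> < \<rho>" unfolding Tset_def by auto
  then show "y \<in> Tset (-c) \<rho>" unfolding Tset_def by (auto intro!: exI[of _ "-n"] simp: abs_minus_commute)
next
  assume "y \<in> Tset (-c) \<rho>"
  then obtain n::int where "\<bar>y + of_int n - (-c)\<bar> < \<rho>" unfolding Tset_def by auto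
  then show "- y \<in> Tset c \<rho>" unfolding Tset_def by (auto intro!: exI[of _ "-n"] simp: abs_minus_commute)
qed

lemma nn_integral_translate:
  fixes f :: "real \<Rightarrow> ennreal"
  assumes [measurable]: "f \<in> borel_measurable borel"
  shows "(\<integral>\<^sup>+x. f x \<partial>lborel) = (\<integral>\<^sup>+x. f (x + t) \<partial>lborel)"
  using nn_integral_real_affine[OF assms, of 1 t] by (simp add: add.commute)

lemma periodic_int:
  fixes h :: "real \<Rightarrow> 'a"
  assumes "\<And>x. h (x + 1) = h x"
  shows "h (x + of_int k) = h x"
proof -
  have nat: "h (y + of_nat n) = h y" for y n
  proof (induction n)
    case (Suc n)
    have "y + of_nat (Suc n) = (y + of_nat n) + 1" by simp
    then show ?case using assms Suc by metis
  qed simp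
  show ?thesis
  proof (cases "k \<ge> 0")
    case True then show ?thesis using nat[of x "nat k"] by simp
  next
    case False
    have e: "x + of_int k + of_nat (nat (-k)) = x" using False by simp
    show ?thesis using nat[of "x + of_int k" "nat (-k)"] unfolding e by simp
  qed
qed

lemma shift_invariance:
  fixes h :: "real \<Rightarrow> ennreal"
  assumes [measurable]: "h \<in> borel_measurable borel"
  assumes per: "\<And>x. h (x + 1) = h x"
  shows "(\<integral>\<^sup>+x. indicator {0..<1} x * h (x + s) \<partial>lborel) = (\<integral>\<^sup>+x. indicator {0..<1} x * h x \<partial>lborel)"
proof -
  define k where "k = \<lfloor>s\<rfloor>"
  define f where "f = s - of_int k"
  have f: "0 \<le> f" "f < 1" unfolding f_def k_def by linarith+
  have hs: "h (x + s) = h (x + f)" for x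
    using periodic_int[of h "x + f" k, OF per] by (simp add: f_def algebra_simps)
  have "(\<integral>\<^sup>+x. indicator {0..<1} x * h (x + s) \<partial>lborel) = (\<integral>\<^sup>+x. indicator {0..<1} x * h (x + f) \<partial>lborel)"
    by (simp add: hs)
  also have "\<dots> = (\<integral>\<^sup>+y. indicator {0..<1} (y - f) * h y \<partial>lborel)"
    by (subst nn_integral_translate[of _ f]) auto
  also have "\<dots> = (\<integral>\<^sup>+y. indicator {f..<1} y * h y + indicator {1..<1+f} y * h y \<partial>lborel)"
    by (intro nn_integral_cong) (use f in \<open>auto simp: indicator_def\<close>)
  also have "\<dots> = (\<integral>\<^sup>+y. indicator {f..<1} y * h y \<partial>lborel) + (\<integral>\<^sup>+y. indicator {1..<1+f} y * h y \<partial>lborel)"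
    by (rule nn_integral_add) auto
  also have "(\<integral>\<^sup>+y. indicator {1..<1+f} y * h y \<partial>lborel) = (\<integral>\<^sup>+y. indicator {1..<1+f} (y+1) * h (y+1) \<partial>lborel)"
    by (subst nn_integral_translate[of _ 1]) auto
  also have "\<dots> = (\<integral>\<^sup>+y. indicator {0..<f} y * h y \<partial>lborel)"
    by (intro nn_integral_cong) (auto simp: per indicator_def)
  also have "(\<integral>\<^sup>+y. indicator {f..<1} y * h y \<partial>lborel) + (\<integral>\<^sup>+y. indicator {0..<f} y * h y \<partial>lborel)
      = (\<integral>\<^sup>+y. indicator {f..<1} y * h y + indicator {0..<f} y * h y \<partial>lborel)"
    by (rule nn_integral_add[symmetric]) auto
  also have "\<dots> = (\<integral>\<^sup>+x. indicator {0..<1} x * h x \<partial>lborel)"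
    by (intro nn_integral_cong) (use f in \<open>auto simp: indicator_def\<close>)
  finally show ?thesis .
qed

lemma tau:
  "emeasure lborel ({0..<1} \<inter> Tset c \<rho>) = ennreal (ar \<rho>)"
proof -
  have per: "indicator (Tset c \<rho>) (x + 1) = (indicator (Tset c \<rho>) x :: ennreal)" for x
    using Tset_shift[of x 1 c \<rho>] by (simp add: indicator_def)
  have "emeasure lborel ({0..<1} \<inter> Tset c \<rho>) = (\<integral>\<^sup>+x. indicator ({0..<1} \<inter> Tset c \<rho>) x \<partial>lborel)"
    by (rule nn_integral_indicator[symmetric]) auto
  also have "\<dots> = (\<integral>\<^sup>+x. indicator {0..<1} x * indicator (Tset c \<rho>) x \<partial>lborel)"
    by (simp add: indicator_inter_arith)
  also have "\<dots> = (\<integral>\<^sup>+x. indicator {0..<1} x * indicator (Tset c \<rho>) (x + (c - 1/2)) \<partial>lborel)"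
    by (rule shift_invariance[symmetric]) (auto simp: per)
  also have "\<dots> = ennreal (ar \<rho>)"
  proof (cases "\<rho> \<le> 0")
    case True
    then have "Tset c \<rho> = {}" unfolding Tset_def by force
    then show ?thesis using True by (simp add: ar_def)
  next
    case False
    show ?thesis
    proof (cases "\<rho> > 1/2")
      case True
      have "indicator {0..<1} x * indicator (Tset c \<rho>) (x + (c - 1/2)) = (indicator {0..<1} x :: ennreal)" for x
      proof (cases "x \<in> {0..<1}")
        case True
        then have "x + (c - 1/2) \<in> Tset c \<rho>" using \<open>\<rho> > 1/2\<close> unfolding Tset_def
          by (auto intro!: exI[of _ 0])
        then show ?thesis by simp
      qed simp
      then show ?thesis using True False by (simp add: ar_def)
    next
      case False2: False
      have "indicator {0..<1} x * indicator (Tset c \<rho>) (x + (c - 1/2)) = (indicator {1/2-\<rho><..<1/2+\<rho>} x :: ennreal)" for x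
      proof (cases "x \<in> {0..<1}")
        case True
        have "(x + (c - 1/2) \<in> Tset c \<rho>) = (x \<in> {1/2-\<rho><..<1/2+\<rho>})"
        proof
          assume "x + (c - 1/2) \<in> Tset c \<rho>"
          then obtain n::int where n0: "\<bar>x + (c - 1/2) + of_int n - c\<bar> < \<rho>" unfolding Tset_def by auto
          then have n: "\<bar>x - 1/2 + of_int n\<bar> < \<rho>" by argo
          have "n = 0"
          proof (rule ccontr)
            assume "n \<noteq> 0"
            then have "\<bar>of_int n::real\<bar> \<ge> 1" by linarith
            then show False using n True False2 by (auto simp: abs_if split: if_splits)
          qed
          then show "x \<in> {1/2-\<rho><..<1/2+\<rho>}" using n by auto
        next
          assume "x \<in> {1/2-\<rho><..<1/2+\<rho>}"
          then show "x + (c - 1/2) \<in> Tset c \<rho>" unfolding Tset_def by (auto intro!: exI[of _ 0])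
        qed
        then show ?thesis using True by (simp add: indicator_def)
      next
        case False
        then show ?thesis using False2 by (auto simp: indicator_def)
      qed
      then have "(\<integral>\<^sup>+x. indicator {0..<1} x * indicator (Tset c \<rho>) (x + (c - 1/2)) \<partial>lborel)
         = emeasure lborel {1/2-\<rho><..<1/2+\<rho>}" by simp
      then show ?thesis using False False2 by (simp add: ar_def)
    qed
  qed
  finally show ?thesis .
qed




lemma card_int_interval:
  fixes a b :: real
  assumes "a \<le> b"
  shows "real (card {m::int. a < of_int m \<and> of_int m < b}) \<le> b - a + 1"
proof -
  have sub: "{m::int. a < of_int m \<and> of_int m < b} \<subseteq> {\<lfloor>a\<rfloor>+1 .. \<lceil>b\<rceil>-1}"
  proof
    fix m assume "m \<in> {m::int. a < of_int m \<and> of_int m < b}"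
    then have "a < of_int m" "of_int m < b" by auto
    then have "\<lfloor>a\<rfloor> < m" "m < \<lceil>b\<rceil>" by (simp_all add: floor_less_iff less_ceiling_iff)
    then show "m \<in> {\<lfloor>a\<rfloor>+1 .. \<lceil>b\<rceil>-1}" by simp
  qed
  have "card {m::int. a < of_int m \<and> of_int m < b} \<le> card {\<lfloor>a\<rfloor>+1 .. \<lceil>b\<rceil>-1}"
    by (rule card_mono[OF _ sub]) simp
  also have "\<dots> = nat (\<lceil>b\<rceil> - \<lfloor>a\<rfloor> - 1)" by simp
  finally have "real (card {m::int. a < of_int m \<and> of_int m < b}) \<le> real (nat (\<lceil>b\<rceil> - \<lfloor>a\<rfloor> - 1))"
    by linarith
  also have "\<dots> \<le> b - a + 1"
  proof (cases "\<lceil>b\<rceil> - \<lfloor>a\<rfloor> - 1 \<ge> 0")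
    case True
    then have "real (nat (\<lceil>b\<rceil> - \<lfloor>a\<rfloor> - 1)) = of_int (\<lceil>b\<rceil> - \<lfloor>a\<rfloor> - 1)" by simp
    then show ?thesis using ceiling_correct[of b] floor_correct[of a] by linarith
  next
    case False then show ?thesis using assms by simp
  qed
  finally show ?thesis .
qed




lemma count_bound:
  fixes q r :: int and z c \<rho> :: real
  assumes q: "q > 0" and r: "r \<noteq> 0"
  shows "real (card {j\<in>{0..<q}. z + of_int r * of_int j / of_int q \<in> Tset c \<rho>}) \<le> of_int q * ar \<rho> + of_int (gcd r q)"
proof -
  define A where "A = {j\<in>{0..<q}. z + of_int r * of_int j / of_int q \<in> Tset c \<rho>}"
  define g where "g = gcd r q"
  have g0: "g > 0" using q by (simp add: g_def)
  have subA: "A \<subseteq> {0..<q}" unfolding A_def by auto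
  have finA: "finite A" using subA by (rule finite_subset) simp
  have cardA: "card A \<le> nat q"
    using card_mono[OF _ subA] by simp
  show ?thesis
  proof (cases "\<rho> \<le> 0")
    case True
    then have "Tset c \<rho> = {}" unfolding Tset_def by force
    then show ?thesis using g0 True by (simp add: ar_def g_def)
  next
    case rpos: False
    show ?thesis
    proof (cases "2 * \<rho> \<ge> 1")
      case True
      then have "ar \<rho> = 1" using rpos by (simp add: ar_def)
      then show ?thesis using cardA g0 q unfolding A_def[symmetric] g_def[symmetric] by simp
    next
      case False
      then have ar: "ar \<rho> = 2 * \<rho>" using rpos by (simp add: ar_def)
      define q' where "q' = q div g"
      define r' where "r' = r div g"
      have qg: "q = g * q'" unfolding q'_def g_def by simp
      have rg: "r = g * r'" unfolding r'_def g_def by simp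
      have q'0: "q' > 0" using q g0 qg by (simp add: zero_less_mult_iff)
      have cop: "coprime r' q'" unfolding r'_def q'_def g_def using r by (intro div_gcd_coprime) auto
      have "\<forall>j\<in>A. \<exists>n::int. \<bar>z + of_int r * of_int j / of_int q + of_int n - c\<bar> < \<rho>"
        unfolding A_def Tset_def by auto
      then obtain n where n: "\<And>j. j \<in> A \<Longrightarrow> \<bar>z + of_int r * of_int j / of_int q + of_int (n j) - c\<bar> < \<rho>"
        by metis
      define M where "M j = r' * j + n j * q'" for j
      define lo where "lo = (of_int q * (c - z) - of_int q * \<rho>) / of_int g"
      define hi where "hi = (of_int q * (c - z) + of_int q * \<rho>) / of_int g"
      define I where "I = {m::int. lo < of_int m \<and> of_int m < hi}"
      have MI: "M j \<in> I" if "j \<in> A" for j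
      proof -
        have e: "z + of_int r * of_int j / of_int q + of_int (n j) - c = (of_int g * of_int (M j) / of_int q) + z - c"
        proof -
          have "real_of_int g > 0" "real_of_int q' > 0" using g0 q'0 by simp_all
          then show ?thesis by (simp add: M_def rg qg field_simps)
        qed
        have "\<bar>of_int g * of_int (M j) / of_int q + z - c\<bar> < \<rho>" using n[OF that] e by simp
        then have "of_int q * (c - z) - of_int q * \<rho> < of_int g * of_int (M j)"
             "of_int g * of_int (M j) < of_int q * (c - z) + of_int q * \<rho>"
          using q by (auto simp: abs_less_iff field_simps)
        then show ?thesis unfolding I_def lo_def hi_def using g0 by (simp add: field_simps)
      qed
      define F where "F j = (M j, j div q')" for j
      have inj: "inj_on F A"
      proof (rule inj_onI)
        fix j j' assume j: "j \<in> A" and j': "j' \<in> A" and "F j = F j'"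
        then have Mjj: "M j = M j'" and dd: "j div q' = j' div q'" by (auto simp: F_def)
        then have "r' * (j - j') = q' * (n j' - n j)" unfolding M_def by (simp add: algebra_simps)
        then have "q' dvd r' * (j - j')" by simp
        then have "q' dvd (j - j')" using cop by (simp add: coprime_dvd_mult_right_iff coprime_commute)
        then have "j mod q' = j' mod q'" by (simp add: mod_eq_dvd_iff)
        then show "j = j'" using dd by (metis div_mult_mod_eq)
      qed
      have FB: "F ` A \<subseteq> I \<times> {0..<g}"
      proof
        fix y assume "y \<in> F ` A"
        then obtain j where j: "j \<in> A" "y = F j" by auto
        have "0 \<le> j" "j < g * q'" using j qg unfolding A_def by auto
        then have "0 \<le> j div q'" using q'0 by (simp add: pos_imp_zdiv_nonneg_iff)
        have "j div q' * q' + j mod q' = j" by (rule div_mult_mod_eq)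
        moreover have "j mod q' \<ge> 0" using q'0 by simp
        ultimately have "q' * (j div q') < q' * g" using \<open>j < g * q'\<close> by (simp only: mult.commute[of q' "j div q'"] mult.commute[of q' g])
        then have "j div q' < g" using q'0 by (simp add: mult_less_cancel_left_pos)
        then show "y \<in> I \<times> {0..<g}" using MI[OF j(1)] j \<open>0 \<le> j div q'\<close> by (auto simp: F_def)
      qed
      have finI: "finite I" unfolding I_def
        by (rule finite_subset[of _ "{\<lfloor>lo\<rfloor> .. \<lceil>hi\<rceil>}"]) (auto, linarith+)
      have "card A \<le> card (I \<times> {0..<g})"
        by (rule card_inj_on_le[OF inj FB]) (simp add: finI)
      also have "\<dots> = card I * nat g" by (simp add: card_cartesian_product)
      finally have "real (card A) \<le> real (card I * nat g)" by (rule of_nat_mono)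
      also have "\<dots> = real (card I) * of_int g" using g0 by (simp add: of_nat_nat)
      also have "\<dots> \<le> (hi - lo + 1) * of_int g"
      proof (rule mult_right_mono)
        show "real (card I) \<le> hi - lo + 1" unfolding I_def
          by (rule card_int_interval) (use q rpos g0 in \<open>simp add: lo_def hi_def divide_right_mono\<close>)
      qed (use g0 in simp)
      also have "\<dots> = of_int q * (2 * \<rho>) + of_int g"
        using g0 by (simp add: hi_def lo_def field_simps)
      finally show ?thesis unfolding A_def[symmetric] g_def[symmetric] ar by simp
    qed
  qed
qed




lemma sum_indicator_card:
  fixes w :: "int \<Rightarrow> real"
  assumes "finite A"
  shows "(\<Sum>j\<in>A. indicator T (w j) :: ennreal) = of_nat (card {j\<in>A. w j \<in> T})"
proof -
  have "(\<Sum>j\<in>A. indicator T (w j) :: ennreal) = (\<Sum>j\<in>A. if w j \<in> T then 1 else 0)"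
    by (simp add: indicator_def of_bool_def)
  also have "\<dots> = (\<Sum>j\<in>{j\<in>A. w j \<in> T}. 1)"
    by (rule sum.inter_filter[symmetric]) (rule assms)
  also have "\<dots> = of_nat (card {j\<in>A. w j \<in> T})" by simp
  finally show ?thesis .
qed

lemma indicator_unit_sum:
  fixes q :: int and y :: real
  shows "(\<Sum>j\<in>{0..<q}. indicator {of_int j..<of_int j + 1} y :: ennreal) = indicator {0..<of_int q} y"
proof -
  have "(\<Sum>j\<in>{0..<q}. indicator {of_int j..<of_int j + 1} y :: ennreal) = (\<Sum>j\<in>{0..<q}. if j = \<lfloor>y\<rfloor> then 1 else 0)"
  proof (intro sum.cong refl)
    fix j assume "j \<in> {0..<q}"
    have "(y \<in> {of_int j..<of_int j + 1}) = (j = \<lfloor>y\<rfloor>)"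
      using floor_unique[of j y] by auto
    then show "indicator {of_int j..<of_int j + 1} y = (if j = \<lfloor>y\<rfloor> then 1 else (0::ennreal))"
      by (simp add: indicator_def)
  qed
  also have "\<dots> = (if \<lfloor>y\<rfloor> \<in> {0..<q} then 1 else 0)"
    by (simp add: sum.delta')
  also have "\<dots> = indicator {0..<of_int q} y"
  proof -
    have "(\<lfloor>y\<rfloor> \<in> {0..<q}) = (y \<in> {0..<of_int q})"
      by (auto simp: floor_less_iff le_floor_iff)
    then show ?thesis by (simp add: indicator_def)
  qed
  finally show ?thesis .
qed

lemma main1d:
  fixes q r :: int and c1 c2 \<rho>1 \<rho>2 :: real
  assumes q: "q > 0" and r: "r \<noteq> 0"
  shows "emeasure lborel {t. 0 \<le> t \<and> t \<le> 1 \<and> of_int r * t \<in> Tset c1 \<rho>1 \<and> of_int q * t \<in> Tset c2 \<rho>2}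
     \<le> ennreal ((ar \<rho>1 + of_int (gcd r q) / of_int q) * ar \<rho>2)"
proof -
  define T1 where "T1 = Tset c1 \<rho>1"
  define T2 where "T2 = Tset c2 \<rho>2"
  have [measurable]: "T1 \<in> sets borel" "T2 \<in> sets borel" unfolding T1_def T2_def by simp_all
  define Q where "Q = (of_int q :: real)"
  define R where "R = (of_int r :: real)"
  have Q0: "Q > 0" using q by (simp add: Q_def)
  define G where "G y = indicator T1 (R * y / Q) * (indicator T2 y :: ennreal)" for y
  have [measurable]: "G \<in> borel_measurable borel" unfolding G_def by measurable
  define f where "f y = indicator {0..Q} y * G y" for y
  have [measurable]: "f \<in> borel_measurable borel" unfolding f_def by measurable
  define S where "S = {t. 0 \<le> t \<and> t \<le> 1 \<and> of_int r * t \<in> Tset c1 \<rho>1 \<and> of_int q * t \<in> Tset c2 \<rho>2}"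
  have Sm: "S \<in> sets lborel" unfolding S_def by measurable
  have "emeasure lborel S = (\<integral>\<^sup>+t. indicator S t \<partial>lborel)"
    by (rule nn_integral_indicator[symmetric]) (rule Sm)
  also have "\<dots> = (\<integral>\<^sup>+t. f (0 + Q * t) \<partial>lborel)"
  proof (intro nn_integral_cong)
    fix t :: real
    have "R * (Q * t) / Q = of_int r * t" using Q0 by (simp add: R_def)
    moreover have "(0 \<le> Q * t \<and> Q * t \<le> Q) = (0 \<le> t \<and> t \<le> 1)"
      using Q0 by (simp add: zero_le_mult_iff)
    ultimately show "indicator S t = f (0 + Q * t)"
      unfolding f_def G_def S_def T1_def T2_def Q_def by (auto simp: indicator_def)
  qed
  finally have e1: "emeasure lborel S = (\<integral>\<^sup>+t. f (0 + Q * t) \<partial>lborel)" .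
  have e2: "(\<integral>\<^sup>+y. f y \<partial>lborel) = ennreal Q * (\<integral>\<^sup>+t. f (0 + Q * t) \<partial>lborel)"
    using nn_integral_real_affine[of f Q 0] Q0 by simp
  have "(\<integral>\<^sup>+y. f y \<partial>lborel) = (\<integral>\<^sup>+y. indicator {0..<Q} y * G y \<partial>lborel)"
    by (rule nn_integral_cong_AE) (use AE_lborel_singleton[of Q] in \<open>eventually_elim, auto simp: f_def indicator_def\<close>)
  also have "\<dots> = (\<integral>\<^sup>+y. (\<Sum>j\<in>{0..<q}. indicator {of_int j..<of_int j + 1} y * G y) \<partial>lborel)"
    by (intro nn_integral_cong) (simp only: indicator_unit_sum[symmetric] Q_def sum_distrib_right)
  also have "\<dots> = (\<Sum>j\<in>{0..<q}. (\<integral>\<^sup>+y. indicator {of_int j..<of_int j + 1} y * G y \<partial>lborel))"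
    by (rule nn_integral_sum) auto
  also have "\<dots> = (\<Sum>j\<in>{0..<q}. (\<integral>\<^sup>+x. indicator {0..<1} x * indicator T2 x * indicator T1 (R * x / Q + R * of_int j / Q) \<partial>lborel))"
  proof (intro sum.cong refl)
    fix j assume "j \<in> {0..<q}"
    have "(\<integral>\<^sup>+y. indicator {of_int j..<of_int j + 1} y * G y \<partial>lborel)
        = (\<integral>\<^sup>+x. indicator {of_int j..<of_int j + 1} (x + of_int j) * G (x + of_int j) \<partial>lborel)"
      by (rule nn_integral_translate) auto
    also have "\<dots> = (\<integral>\<^sup>+x. indicator {0..<1} x * indicator T2 x * indicator T1 (R * x / Q + R * of_int j / Q) \<partial>lborel)"
    proof (intro nn_integral_cong)
      fix x
      have "indicator T2 (x + of_int j) = (indicator T2 x :: ennreal)"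
        unfolding T2_def indicator_def using Tset_shift[of x j c2 \<rho>2] by simp
      moreover have "R * (x + of_int j) / Q = R * x / Q + R * of_int j / Q" by (simp add: distrib_left add_divide_distrib)
      ultimately show "indicator {of_int j..<of_int j + 1} (x + of_int j) * G (x + of_int j)
          = indicator {0..<1} x * indicator T2 x * indicator T1 (R * x / Q + R * of_int j / Q)"
        unfolding G_def by (simp add: indicator_def mult.commute)
    qed
    finally show "(\<integral>\<^sup>+y. indicator {of_int j..<of_int j + 1} y * G y \<partial>lborel)
        = (\<integral>\<^sup>+x. indicator {0..<1} x * indicator T2 x * indicator T1 (R * x / Q + R * of_int j / Q) \<partial>lborel)" .
  qed
  also have "\<dots> = (\<integral>\<^sup>+x. indicator {0..<1} x * indicator T2 x * (\<Sum>j\<in>{0..<q}. indicator T1 (R * x / Q + R * of_int j / Q)) \<partial>lborel)"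
    by (subst nn_integral_sum[symmetric]) (auto simp: sum_distrib_left)
  also have "\<dots> \<le> (\<integral>\<^sup>+x. indicator {0..<1} x * indicator T2 x * ennreal (Q * ar \<rho>1 + of_int (gcd r q)) \<partial>lborel)"
  proof (intro nn_integral_mono mult_left_mono)
    fix x
    have "(\<Sum>j\<in>{0..<q}. indicator T1 (R * x / Q + R * of_int j / Q) :: ennreal)
        = of_nat (card {j\<in>{0..<q}. R * x / Q + R * of_int j / Q \<in> T1})"
      by (rule sum_indicator_card) simp
    also have "\<dots> = ennreal (real (card {j\<in>{0..<q}. R * x / Q + R * of_int j / Q \<in> T1}))"
      by (simp add: ennreal_of_nat_eq_real_of_nat)
    also have "\<dots> \<le> ennreal (Q * ar \<rho>1 + of_int (gcd r q))"
      using count_bound[OF q r, of "R * x / Q" c1 \<rho>1] unfolding T1_def R_def Q_def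
      by (intro ennreal_leI) (simp add: mult.assoc)
    finally show "(\<Sum>j\<in>{0..<q}. indicator T1 (R * x / Q + R * of_int j / Q) :: ennreal) \<le> ennreal (Q * ar \<rho>1 + of_int (gcd r q))" .
  qed auto
  also have "\<dots> = ennreal (Q * ar \<rho>1 + of_int (gcd r q)) * (\<integral>\<^sup>+x. indicator ({0..<1} \<inter> T2) x \<partial>lborel)"
    by (subst nn_integral_cmult[symmetric]) (auto simp: indicator_inter_arith mult.commute mult.left_commute)
  also have "\<dots> = ennreal (Q * ar \<rho>1 + of_int (gcd r q)) * ennreal (ar \<rho>2)"
    using tau[of c2 \<rho>2] unfolding T2_def by simp
  finally have "ennreal Q * emeasure lborel S \<le> ennreal (Q * ar \<rho>1 + of_int (gcd r q)) * ennreal (ar \<rho>2)"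
    using e1 e2 by simp
  then have "ennreal (1/Q) * (ennreal Q * emeasure lborel S) \<le> ennreal (1/Q) * (ennreal (Q * ar \<rho>1 + of_int (gcd r q)) * ennreal (ar \<rho>2))"
    by (rule mult_left_mono) simp
  moreover have "ennreal (1/Q) * (ennreal Q * emeasure lborel S) = emeasure lborel S"
    using Q0 by (simp add: mult.assoc[symmetric] ennreal_mult[symmetric])
  moreover have "ennreal (1/Q) * (ennreal (Q * ar \<rho>1 + of_int (gcd r q)) * ennreal (ar \<rho>2)) = ennreal ((ar \<rho>1 + of_int (gcd r q) / of_int q) * ar \<rho>2)"
  proof -
    have "ar \<rho>1 \<ge> 0" "ar \<rho>2 \<ge> 0" by (auto simp: ar_def)
    moreover have "gcd r q \<ge> 0" by simp
    ultimately have n1: "Q * ar \<rho>1 + of_int (gcd r q) \<ge> 0" "ar \<rho>2 \<ge> 0" "1/Q \<ge> 0" using Q0 by simp_all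
    have "ennreal (Q * ar \<rho>1 + of_int (gcd r q)) * ennreal (ar \<rho>2) = ennreal ((Q * ar \<rho>1 + of_int (gcd r q)) * ar \<rho>2)"
      by (rule ennreal_mult[symmetric]) (use n1 in simp_all)
    moreover have "ennreal (1/Q) * ennreal ((Q * ar \<rho>1 + of_int (gcd r q)) * ar \<rho>2) = ennreal (1/Q * ((Q * ar \<rho>1 + of_int (gcd r q)) * ar \<rho>2))"
      by (rule ennreal_mult[symmetric]) (use n1 in simp_all)
    moreover have "1/Q * ((Q * ar \<rho>1 + of_int (gcd r q)) * ar \<rho>2) = (ar \<rho>1 + of_int (gcd r q) / of_int q) * ar \<rho>2"
      using Q0 by (simp add: Q_def field_simps)
    ultimately show ?thesis by simp
  qed
  ultimately show ?thesis unfolding S_def by simp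
qed




lemma prod_set_sets:
  fixes S :: "'n::finite \<Rightarrow> real set"
  assumes "\<And>i. S i \<in> sets borel"
  shows "{x::real^'n. \<forall>i. x$i \<in> S i} \<in> sets lborel"
proof -
  have "{x::real^'n. \<forall>i. x$i \<in> S i} = (\<Inter>i. (\<lambda>x. x$i) -` S i)" by auto
  also have "\<dots> \<in> sets borel"
  proof (intro sets.finite_INT)
    fix i :: 'n
    have "(\<lambda>x::real^'n. x$i) \<in> borel_measurable borel"
      by (intro borel_measurable_continuous_onI continuous_intros)
    then have "(\<lambda>x::real^'n. x$i) -` S i \<inter> space borel \<in> sets borel"
      by (rule measurable_sets) (rule assms)
    then show "(\<lambda>x::real^'n. x$i) -` S i \<in> sets borel" by simp
  qed auto
  finally show ?thesis by simp
qed

lemma torus_ball_eq: "torus_ball c \<rho> = {y. \<forall>i. y$i \<in> Tset (c$i) \<rho>}"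
proof (intro set_eqI iffI)
  fix y assume "y \<in> torus_ball c \<rho>"
  then obtain p where p: "int_vec p" "\<And>i. \<bar>y $ i + p $ i - c $ i\<bar> < \<rho>"
    unfolding torus_ball_def by auto
  show "y \<in> {y. \<forall>i. y$i \<in> Tset (c$i) \<rho>}"
  proof (safe)
    fix i
    from p(1) have "p $ i \<in> \<int>" unfolding int_vec_def by auto
    then obtain n where "p $ i = of_int n" by (auto elim: Ints_cases)
    then show "y$i \<in> Tset (c$i) \<rho>" using p(2)[of i] unfolding Tset_def by auto
  qed
next
  fix y assume "y \<in> {y. \<forall>i. y$i \<in> Tset (c$i) \<rho>}"
  then have "\<forall>i. \<exists>n::int. \<bar>y$i + of_int n - c$i\<bar> < \<rho>" unfolding Tset_def by auto
  then obtain n where n: "\<And>i. \<bar>y$i + of_int (n i) - c$i\<bar> < \<rho>" by metis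
  define p where "p = (\<chi> i. (of_int (n i) :: real))"
  have "int_vec p" unfolding int_vec_def p_def by simp
  then show "y \<in> torus_ball c \<rho>" unfolding torus_ball_def using n by (auto simp: p_def)
qed

lemma A1_eq: "A1 q (torus_ball c \<rho>) = {x. \<forall>i. 0 \<le> x$i \<and> x$i \<le> 1 \<and> of_int q * x$i \<in> Tset (c$i) \<rho>}"
proof (intro set_eqI iffI)
  fix x assume "x \<in> A1 q (torus_ball c \<rho>)"
  then obtain p where x: "\<forall>i. 0 \<le> x $ i \<and> x $ i \<le> 1" and p: "int_vec p"
      and "of_int q *\<^sub>R x + p \<in> torus_ball c \<rho>"
    unfolding A1_def by auto
  then have pi: "\<And>i. of_int q * x$i + p$i \<in> Tset (c$i) \<rho>" unfolding torus_ball_eq by auto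
  show "x \<in> {x. \<forall>i. 0 \<le> x$i \<and> x$i \<le> 1 \<and> of_int q * x$i \<in> Tset (c$i) \<rho>}"
  proof (safe)
    fix i
    from p have "p $ i \<in> \<int>" unfolding int_vec_def by auto
    then obtain n where "p $ i = of_int n" by (auto elim: Ints_cases)
    then show "of_int q * x$i \<in> Tset (c$i) \<rho>" using pi[of i] Tset_shift by metis
  qed (use x in auto)
next
  fix x assume "x \<in> {x. \<forall>i. 0 \<le> x$i \<and> x$i \<le> 1 \<and> of_int q * x$i \<in> Tset (c$i) \<rho>}"
  then show "x \<in> A1 q (torus_ball c \<rho>)" unfolding A1_def torus_ball_eq
    by (auto intro!: exI[of _ 0] simp: int_vec_def)
qed

lemma main1d_gen:
  fixes q r :: int and c1 c2 \<rho>1 \<rho>2 :: real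
  assumes q: "q \<noteq> 0" and r: "r \<noteq> 0"
  shows "emeasure lborel {t. 0 \<le> t \<and> t \<le> 1 \<and> of_int r * t \<in> Tset c1 \<rho>1 \<and> of_int q * t \<in> Tset c2 \<rho>2}
     \<le> ennreal ((ar \<rho>1 + of_int (gcd r q) / \<bar>of_int q\<bar>) * ar \<rho>2)"
proof (cases "q > 0")
  case True then show ?thesis using main1d[OF True r] by simp
next
  case False
  then have q': "-q > 0" using q by simp
  have "{t. 0 \<le> t \<and> t \<le> 1 \<and> of_int r * t \<in> Tset c1 \<rho>1 \<and> of_int q * t \<in> Tset c2 \<rho>2}
      = {t. 0 \<le> t \<and> t \<le> 1 \<and> of_int r * t \<in> Tset c1 \<rho>1 \<and> of_int (-q) * t \<in> Tset (-c2) \<rho>2}"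
    using Tset_neg[of "of_int q * _" "-c2" \<rho>2] by auto
  then show ?thesis using main1d[OF q' r, of c1 \<rho>1 "-c2" \<rho>2] False by simp
qed

lemma final_ineq:
  fixes a1 a2 t :: real and m :: nat
  assumes "a1 \<ge> 0" "a2 \<ge> 0" "t \<ge> 0"
  shows "((a1 + t) * a2) ^ m \<le> 2 ^ m * (a1 ^ m * a2 ^ m + a2 ^ m * t ^ m)"
proof -
  have "(a1 + t) ^ m \<le> (2 * max a1 t) ^ m"
    by (rule power_mono) (use assms in auto)
  also have "\<dots> = 2 ^ m * max a1 t ^ m" by (simp add: power_mult_distrib)
  also have "\<dots> \<le> 2 ^ m * (a1 ^ m + t ^ m)"
    by (rule mult_left_mono) (use assms in \<open>auto simp: max_def\<close>)
  finally have i: "(a1 + t) ^ m * a2 ^ m \<le> 2 ^ m * (a1 ^ m + t ^ m) * a2 ^ m"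
    by (rule mult_right_mono) (use assms in simp)
  have e: "((a1+t)*a2)^m = (a1+t)^m*a2^m" by (rule power_mult_distrib)
  have e2: "2^m*(a1^m+t^m)*a2^m = 2 ^ m * (a1 ^ m * a2 ^ m + a2 ^ m * t ^ m)" by (simp add: algebra_simps)
  show ?thesis using i e e2 by linarith
qed

lemma ar_nonneg: "ar \<rho> \<ge> 0" by (simp add: ar_def)

theorem mainTheorem10:
  fixes c1 c2 :: "real ^ 'm" and \<rho>1 \<rho>2 :: real and r q :: int
  assumes "r \<noteq> 0" and "q \<noteq> 0"
  shows "measure lebesgue (A1 r (torus_ball c1 \<rho>1) \<inter> A1 q (torus_ball c2 \<rho>2))
    \<le> 2 ^ CARD('m) * (torus_measure (torus_ball c1 \<rho>1) * torus_measure (torus_ball c2 \<rho>2)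
        + torus_measure (torus_ball c2 \<rho>2) * (1 / \<bar>real_of_int q\<bar> ^ CARD('m))
          * real_of_int (gcd r q) ^ CARD('m))"
proof -
  define t where "t = of_int (gcd r q) / \<bar>real_of_int q\<bar>"
  have t0: "t \<ge> 0" unfolding t_def by simp
  define b where "b = (ar \<rho>1 + t) * ar \<rho>2"
  have b0: "b \<ge> 0" unfolding b_def using t0 ar_nonneg[of \<rho>1] ar_nonneg[of \<rho>2] by simp
  define S where "S i = {t. 0 \<le> t \<and> t \<le> 1 \<and> of_int r * t \<in> Tset (c1$i) \<rho>1 \<and> of_int q * t \<in> Tset (c2$i) \<rho>2}" for i
  have Sm: "S i \<in> sets borel" for i unfolding S_def by measurable
  have L: "A1 r (torus_ball c1 \<rho>1) \<inter> A1 q (torus_ball c2 \<rho>2) = {x::real^'m. \<forall>i. x$i \<in> S i}"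
    unfolding A1_eq S_def by auto
  have "emeasure lborel {x::real^'m. \<forall>i. x$i \<in> S i} = (\<Prod>i\<in>UNIV. emeasure lborel (S i))"
    by (rule emeasure_prod_set[OF Sm])
  also have "\<dots> \<le> (\<Prod>i\<in>(UNIV::'m set). ennreal b)"
    by (intro prod_mono_ennreal) (use main1d_gen[OF assms(2,1)] in \<open>auto simp: S_def b_def t_def\<close>)
  also have "\<dots> = ennreal (b ^ CARD('m))" using b0 by (simp add: ennreal_power)
  finally have "emeasure lborel {x::real^'m. \<forall>i. x$i \<in> S i} \<le> ennreal (b ^ CARD('m))" .
  then have LHS: "measure lebesgue (A1 r (torus_ball c1 \<rho>1) \<inter> A1 q (torus_ball c2 \<rho>2)) \<le> b ^ CARD('m)"
  proof -
    have Lm: "{x::real^'m. \<forall>i. x$i \<in> S i} \<in> sets lborel" by (rule prod_set_sets) (rule Sm)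
    have "measure lebesgue {x::real^'m. \<forall>i. x$i \<in> S i} = measure lborel {x::real^'m. \<forall>i. x$i \<in> S i}"
      by (rule measure_completion) (rule Lm)
    also have "\<dots> \<le> b ^ CARD('m)" unfolding measure_def
      by (rule enn2real_leI) (use b0 \<open>emeasure lborel {x::real^'m. \<forall>i. x$i \<in> S i} \<le> ennreal (b ^ CARD('m))\<close> in simp_all)
    finally show ?thesis unfolding L .
  qed
  have TM: "torus_measure (torus_ball c \<rho>) = ar \<rho> ^ CARD('m)" for c :: "real^'m" and \<rho>
  proof -
    have e: "torus_ball c \<rho> \<inter> {x. \<forall>i. 0 \<le> x $ i \<and> x $ i < 1} = {x. \<forall>i. x$i \<in> {0..<1} \<inter> Tset (c$i) \<rho>}"
      unfolding torus_ball_eq by auto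
    have m: "\<And>i. {0..<1} \<inter> Tset (c$i) \<rho> \<in> sets borel" by simp
    have "emeasure lborel {x::real^'m. \<forall>i. x$i \<in> {0..<1} \<inter> Tset (c$i) \<rho>} = (\<Prod>i\<in>(UNIV::'m set). ennreal (ar \<rho>))"
      using emeasure_prod_set[of "\<lambda>i. {0..<1} \<inter> Tset (c$i) \<rho>", OF m] by (simp only: tau)
    also have "\<dots> = ennreal (ar \<rho> ^ CARD('m))" using ar_nonneg by (simp add: ennreal_power)
    moreover have "{x::real^'m. \<forall>i. x$i \<in> {0..<1} \<inter> Tset (c$i) \<rho>} \<in> sets lborel"
      by (rule prod_set_sets) (rule m)
    ultimately show ?thesis unfolding torus_measure_def e using ar_nonneg[of \<rho>]
      by (simp add: measure_def)
  qed
  have "b ^ CARD('m) \<le> 2 ^ CARD('m) * ((ar \<rho>1) ^ CARD('m) * (ar \<rho>2) ^ CARD('m) + (ar \<rho>2) ^ CARD('m) * t ^ CARD('m))"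
    unfolding b_def by (rule final_ineq) (use t0 ar_nonneg in auto)
  also have "\<dots> = 2 ^ CARD('m) * (torus_measure (torus_ball c1 \<rho>1) * torus_measure (torus_ball c2 \<rho>2)
        + torus_measure (torus_ball c2 \<rho>2) * (1 / \<bar>real_of_int q\<bar> ^ CARD('m))
          * real_of_int (gcd r q) ^ CARD('m))"
    unfolding TM t_def by (simp add: power_divide)
  finally show ?thesis using LHS by linarith
qed


end
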